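(* For every $n$, $\mu_n>0$, $\theta\in\mathbb R$ and $x\in\mathbb R$, $$F_{A,n,\theta}(x)=\mathbf 1(n^{1/2}\theta+x\ge0)\,\Phi\big(z^{(2)}_{n,\theta}(x)\big)+\mathbf 1(n^{1/2}\theta+x<0)\,\Phi\big(z^{(1)}_{n,\theta}(x)\big).$$ Consequently the distribution of $n^{1/2}(\hat\theta_A-\theta)$ is the sum of an atom of mass $\Phi(n^{1/2}(-\theta+\mu_n))-\Phi(n^{1/2}(-\theta-\mu_n))$ at the point $-n^{1/2}\theta$ and an absolutely continuous part with Lebesgue density $$\tfrac12\Big\{\mathbf 1(n^{1/2}\theta+x>0)\,\phi\big(z^{(2)}_{n,\theta}(x)\big)(1+t_{n,\theta}(x))+\mathbf 1(n^{1/2}\theta+x<0)\,\phi\big(z^{(1)}_{n,\theta}(x)\big)(1-t_{n,\theta}(x))\Big\},$$ where $t_{n,\theta}(x)=\tfrac12(n^{1/2}\theta+x)\big/\big(((n^{1/2}\theta+x)/2)^2+n\mu_n^2\big)^{1/2}$.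
   Context: Gaussian location model: for each sample size $n$, $y_1,\dots,y_n$ are i.i.d. $N(\theta,1)$ with $\theta\in\mathbb R$ unknown; $\bar y$ is their mean. $P_{n,\theta}$ denotes the probability governing a sample of size $n$ when $\theta$ is the true parameter. Given a nonrandom tuning parameter $\mu_n>0$, the adaptive LASSO estimator is $\hat\theta_A=0$ if $|\bar y|\le\mu_n$ and $\hat\theta_A=\bar y-\mu_n^2/\bar y$ if $|\bar y|>\mu_n$. $F_{A,n,\theta}(x)=P_{n,\theta}(n^{1/2}(\hat\theta_A-\theta)\le x)$. $\Phi,\phi$ are the standard normal cdf and density. For $x\in\mathbb R$, $$z^{(1)}_{n,\theta}(x)=-\frac{n^{1/2}\theta-x}{2}-\sqrt{\Big(\frac{n^{1/2}\theta+x}{2}\Big)^2+n\mu_n^2},\qquad z^{(2)}_{n,\theta}(x)=-\frac{n^{1/2}\theta-x}{2}+\sqrt{\Big(\frac{n^{1/2}\theta+x}{2}\Big)^2+n\mu_n^2}.$$ *)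

theory Defs
  imports "HOL-Probability.Probability"
begin

definition phi :: "real \<Rightarrow> real" where
  "phi x = std_normal_density x"

definition Phi :: "real \<Rightarrow> real" where
  "Phi x = (LINT t:{..x}|lborel. std_normal_density t)"

definition P :: "nat \<Rightarrow> real \<Rightarrow> (nat \<Rightarrow> real) measure" where
  "P n \<theta> = PiM {..<n} (\<lambda>_. density lborel (normal_density \<theta> 1))"

definition ybar :: "nat \<Rightarrow> (nat \<Rightarrow> real) \<Rightarrow> real" where
  "ybar n y = (\<Sum>i<n. y i) / real n"

text \<open>Adaptive LASSO as a function of the sample mean and tuning parameter mu.\<close>
definition thetaA :: "real \<Rightarrow> real \<Rightarrow> real" where
  "thetaA \<mu> yb = (if \<bar>yb\<bar> \<le> \<mu> then 0 else yb - \<mu>\<^sup>2 / yb)"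

definition FA :: "nat \<Rightarrow> real \<Rightarrow> real \<Rightarrow> real \<Rightarrow> real" where
  "FA n \<mu> \<theta> x = measure (P n \<theta>)
     {y \<in> space (P n \<theta>). sqrt (real n) * (thetaA \<mu> (ybar n y) - \<theta>) \<le> x}"

definition z1 :: "nat \<Rightarrow> real \<Rightarrow> real \<Rightarrow> real \<Rightarrow> real" where
  "z1 n \<mu> \<theta> x = - (sqrt (real n) * \<theta> - x) / 2
     - sqrt (((sqrt (real n) * \<theta> + x) / 2)\<^sup>2 + real n * \<mu>\<^sup>2)"

definition z2 :: "nat \<Rightarrow> real \<Rightarrow> real \<Rightarrow> real \<Rightarrow> real" where
  "z2 n \<mu> \<theta> x = - (sqrt (real n) * \<theta> - x) / 2
     + sqrt (((sqrt (real n) * \<theta> + x) / 2)\<^sup>2 + real n * \<mu>\<^sup>2)"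

definition tA :: "nat \<Rightarrow> real \<Rightarrow> real \<Rightarrow> real \<Rightarrow> real" where
  "tA n \<mu> \<theta> x = ((sqrt (real n) * \<theta> + x) / 2)
     / sqrt (((sqrt (real n) * \<theta> + x) / 2)\<^sup>2 + real n * \<mu>\<^sup>2)"

definition densA :: "nat \<Rightarrow> real \<Rightarrow> real \<Rightarrow> real \<Rightarrow> real" where
  "densA n \<mu> \<theta> x = (1/2) *
     ((if sqrt (real n) * \<theta> + x > 0 then phi (z2 n \<mu> \<theta> x) * (1 + tA n \<mu> \<theta> x) else 0)
    + (if sqrt (real n) * \<theta> + x < 0 then phi (z1 n \<mu> \<theta> x) * (1 - tA n \<mu> \<theta> x) else 0))"

end

theory Submission
  imports Defs
begin


lemma P_prob: "prob_space (P n \<theta>)"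
  unfolding P_def by (auto intro!: prob_space_PiM prob_space_normal_density)

lemma W_dist:
  assumes "n \<ge> 1"
  shows "distributed (P n \<theta>) lborel (\<lambda>y. sqrt (real n) * (ybar n y - \<theta>)) std_normal_density"
proof -
  interpret prob_space "P n \<theta>" by (rule P_prob)
  let ?M = "density lborel (normal_density \<theta> 1)"
  define X where "X = (\<lambda>i (y::nat\<Rightarrow>real). if i < n then y i else 0)"
  have meas: "(\<lambda>y. y i) \<in> borel_measurable (P n \<theta>)" if "i < n" for i
    unfolding P_def using that
    by (intro measurable_PiM_component_rev) auto
  have rv: "random_variable borel (X i)" for i
    using meas[of i] by (cases "i < n") (auto simp: X_def)
  have dM: "distr (P n \<theta>) borel (X i) = ?M" if "i < n" for i
  proof -
    have "distr (P n \<theta>) borel (X i) = distr (P n \<theta>) ?M (\<lambda>y. y i)"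
      by (rule distr_cong) (auto simp: X_def that)
    also have "\<dots> = ?M" unfolding P_def
      by (rule distr_PiM_component) (use that prob_space_normal_density in auto)
    finally show ?thesis .
  qed
  have comp: "distributed (P n \<theta>) lborel (X i) (normal_density \<theta> 1)" if "i < n" for i
  proof -
    have "distr (P n \<theta>) lborel (X i) = distr (P n \<theta>) borel (X i)"
      by (rule distr_cong) auto
    then show ?thesis unfolding distributed_def using dM[OF that] rv[of i] by auto
  qed
  have ind: "indep_vars (\<lambda>i. borel) X {..<n}"
  proof (subst indep_vars_iff_distr_eq_PiM)
    show "{..<n} \<noteq> {}" proof - have "0 \<in> {..<n}" using assms by auto then show ?thesis by blast qed
    show "random_variable borel (X i)" for i by (rule rv)
    have sP: "sets (\<Pi>\<^sub>M i\<in>{..<n}. (borel::real measure)) = sets (P n \<theta>)"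
      unfolding P_def by (rule sets_PiM_cong) simp_all
    have rx: "(\<lambda>i\<in>{..<n}. X i x) = x" if "x \<in> space (P n \<theta>)" for x
    proof
      fix i
      have "x \<in> extensional {..<n}" using that unfolding P_def space_PiM PiE_def by blast
      then show "(\<lambda>i\<in>{..<n}. X i x) i = x i"
        by (cases "i < n") (simp_all add: X_def extensional_def)
    qed
    have "distr (P n \<theta>) (\<Pi>\<^sub>M i\<in>{..<n}. borel) (\<lambda>x. \<lambda>i\<in>{..<n}. X i x)
        = distr (P n \<theta>) (P n \<theta>) (\<lambda>x. x)"
      by (rule distr_cong[OF refl sP]) (rule rx)
    also have "\<dots> = P n \<theta>" by simp
    also have "\<dots> = (\<Pi>\<^sub>M i\<in>{..<n}. distr (P n \<theta>) borel (X i))"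
      unfolding P_def by (rule PiM_cong) (simp_all add: dM[unfolded P_def])
    finally show "distr (P n \<theta>) (\<Pi>\<^sub>M i\<in>{..<n}. borel) (\<lambda>x. \<lambda>i\<in>{..<n}. X i x)
        = (\<Pi>\<^sub>M i\<in>{..<n}. distr (P n \<theta>) borel (X i))" .
  qed
  have ne: "{..<n} \<noteq> {}" proof - have "0 \<in> {..<n}" using assms by auto then show ?thesis by blast qed
  have S: "distributed (P n \<theta>) lborel (\<lambda>x. \<Sum>i\<in>{..<n}. X i x)
      (normal_density (\<Sum>i\<in>{..<n}. \<theta>) (sqrt (\<Sum>i\<in>{..<n}. 1\<^sup>2)))"
    by (rule sum_indep_normal[OF _ ne ind]) (simp_all add: comp)
  have e1: "(\<lambda>x. \<Sum>i\<in>{..<n}. X i x) = (\<lambda>x. \<Sum>i<n. x i)"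
    by (rule ext, rule sum.cong) (auto simp: X_def)
  have S': "distributed (P n \<theta>) lborel (\<lambda>x. \<Sum>i<n. x i) (normal_density (real n * \<theta>) (sqrt (real n)))"
    using S unfolding e1 by simp
  have pos: "0 < sqrt (real n)" using assms by simp
  have S'': "distributed (P n \<theta>) lborel (\<lambda>x. ((\<Sum>i<n. x i) - real n * \<theta>) / sqrt (real n)) std_normal_density"
    using S' normal_standard_normal_convert[OF pos] by simp
  have e2: "(\<lambda>x. ((\<Sum>i<n. x i) - real n * \<theta>) / sqrt (real n)) = (\<lambda>x. sqrt (real n) * (ybar n x - \<theta>))"
  proof
    fix x
    have "real n = sqrt (real n) * sqrt (real n)" by simp
    then show "((\<Sum>i<n. x i) - real n * \<theta>) / sqrt (real n) = sqrt (real n) * (ybar n x - \<theta>)"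
      using pos unfolding ybar_def
      by (simp add: field_simps)
  qed
  show ?thesis using S'' unfolding e2 .
qed



definition gfun :: "real \<Rightarrow> real \<Rightarrow> real" where
  "gfun q s = (if \<bar>s\<bar> \<le> sqrt q then 0 else s - q / s)"

lemma quad_factor:
  fixes s c q r :: real
  assumes "r\<^sup>2 = (c/2)\<^sup>2 + q"
  shows "s\<^sup>2 - c * s - q = (s - (c/2 + r)) * (s - (c/2 - r))"
  using assms by (simp add: algebra_simps power2_eq_square)

lemma key2:
  fixes q c s :: real
  assumes q: "q > 0" and c: "c \<ge> 0"
  shows "gfun q s \<le> c \<longleftrightarrow> s \<le> c/2 + sqrt ((c/2)\<^sup>2 + q)"
proof -
  define r where "r = sqrt ((c/2)\<^sup>2 + q)"
  define m where "m = sqrt q"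
  have r2: "r\<^sup>2 = (c/2)\<^sup>2 + q" unfolding r_def using q by simp
  have m2: "m\<^sup>2 = q" unfolding m_def using q by simp
  have rm: "m \<le> r" unfolding r_def m_def by (rule real_sqrt_le_mono) simp
  have rc: "\<bar>c/2\<bar> \<le> r"
  proof -
    have "sqrt ((c/2)\<^sup>2) \<le> sqrt ((c/2)\<^sup>2 + q)" by (rule real_sqrt_le_mono) (use q in simp)
    then show ?thesis unfolding r_def by simp
  qed
  have m0: "m > 0" unfolding m_def using q by simp
  consider "\<bar>s\<bar> \<le> m" | "s > m" | "s < -m" by linarith
  then show ?thesis
  proof cases
    case 1
    then show ?thesis using c rm unfolding gfun_def m_def[symmetric] r_def[symmetric] by auto
  next
    case 2
    then have s0: "s > 0" using m0 by simp
    have "gfun q s = s - q/s" using 2 unfolding gfun_def m_def[symmetric] by auto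
    also have "\<dots> \<le> c \<longleftrightarrow> s\<^sup>2 - c * s - q \<le> 0"
      using s0 by (simp add: field_simps power2_eq_square)
    also have "\<dots> \<longleftrightarrow> (s - (c/2 + r)) * (s - (c/2 - r)) \<le> 0" using quad_factor[OF r2] by simp
    also have "\<dots> \<longleftrightarrow> s - (c/2 + r) \<le> 0"
    proof -
      have "s - (c/2 - r) > 0" using s0 rc by linarith
      then show ?thesis by (simp add: mult_le_0_iff)
    qed
    finally show ?thesis unfolding r_def by simp
  next
    case 3
    then have s0: "s < 0" using m0 by simp
    have "m\<^sup>2 < (-s)\<^sup>2" by (rule power_strict_mono) (use 3 m0 in auto)
    then have "q < s\<^sup>2" using m2 by simp
    then have "s - q/s < 0" using s0 by (simp add: field_simps power2_eq_square)
    moreover have "gfun q s = s - q/s" using 3 m0 unfolding gfun_def m_def[symmetric] by auto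
    ultimately show ?thesis using c s0 rc unfolding r_def[symmetric] by auto
  qed
qed

lemma key1:
  fixes q c s :: real
  assumes q: "q > 0" and c: "c < 0"
  shows "gfun q s \<le> c \<longleftrightarrow> s \<le> c/2 - sqrt ((c/2)\<^sup>2 + q)"
proof -
  define r where "r = sqrt ((c/2)\<^sup>2 + q)"
  define m where "m = sqrt q"
  have r2: "r\<^sup>2 = (c/2)\<^sup>2 + q" unfolding r_def using q by simp
  have m2: "m\<^sup>2 = q" unfolding m_def using q by simp
  have rm: "m \<le> r" unfolding r_def m_def by (rule real_sqrt_le_mono) simp
  have rc: "\<bar>c/2\<bar> \<le> r"
  proof -
    have "sqrt ((c/2)\<^sup>2) \<le> sqrt ((c/2)\<^sup>2 + q)" by (rule real_sqrt_le_mono) (use q in simp)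
    then show ?thesis unfolding r_def by simp
  qed
  have m0: "m > 0" unfolding m_def using q by simp
  consider "\<bar>s\<bar> \<le> m" | "s > m" | "s < -m" by linarith
  then show ?thesis
  proof cases
    case 1
    then show ?thesis using c rm unfolding gfun_def m_def[symmetric] r_def[symmetric] by auto
  next
    case 2
    then have s0: "s > 0" using m0 by simp
    have "m\<^sup>2 < s\<^sup>2" by (rule power_strict_mono) (use 2 m0 in auto)
    then have "q < s\<^sup>2" using m2 by simp
    then have "s - q/s > 0" using s0 by (simp add: field_simps power2_eq_square)
    moreover have "gfun q s = s - q/s" using 2 m0 unfolding gfun_def m_def[symmetric] by auto
    ultimately show ?thesis using c s0 rc unfolding r_def[symmetric] by auto
  next
    case 3
    then have s0: "s < 0" using m0 by simp
    have "gfun q s = s - q/s" using 3 m0 unfolding gfun_def m_def[symmetric] by auto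
    also have "\<dots> \<le> c \<longleftrightarrow> s\<^sup>2 - c * s - q \<ge> 0"
      using s0 by (simp add: field_simps power2_eq_square)
    also have "\<dots> \<longleftrightarrow> (s - (c/2 + r)) * (s - (c/2 - r)) \<ge> 0" using quad_factor[OF r2] by simp
    also have "\<dots> \<longleftrightarrow> s - (c/2 - r) \<le> 0"
    proof -
      have "s - (c/2 + r) < 0" using s0 rc by linarith
      then show ?thesis by (simp add: zero_le_mult_iff)
    qed
    finally show ?thesis unfolding r_def by simp
  qed
qed

lemma gfun_zero: assumes "q > 0" shows "gfun q s = 0 \<longleftrightarrow> \<bar>s\<bar> \<le> sqrt q"
proof -
  have "s - q/s \<noteq> 0" if "\<bar>s\<bar> > sqrt q"
  proof
    assume "s - q/s = 0"
    have "sqrt q > 0" using assms by simp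
    then have "s \<noteq> 0" using that by auto
    then have "s\<^sup>2 = q" using \<open>s - q/s = 0\<close> by (simp add: field_simps power2_eq_square)
    then have "\<bar>s\<bar> = sqrt q" by (metis real_sqrt_abs)
    then show False using that by simp
  qed
  then show ?thesis unfolding gfun_def by auto
qed




abbreviation "G \<equiv> density lborel std_normal_density"

lemma std_integrable: "integrable lborel std_normal_density"
  using integrable_std_normal_moment[of 0] by simp

lemma std_set_integrable: "S \<in> sets borel \<Longrightarrow> set_integrable lborel S std_normal_density"
  unfolding set_integrable_def by (rule integrable_mult_indicator) (auto simp: std_integrable)

lemma G_prob: "prob_space G" by (rule prob_space_normal_density) simp

lemma G_measure: assumes "S \<in> sets borel"
  shows "measure G S = (LINT x:S|lborel. std_normal_density x)"
proof -
  have "emeasure G S = (\<integral>\<^sup>+x. ennreal (std_normal_density x) * indicator S x \<partial>lborel)"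
    using assms by (simp add: emeasure_density)
  also have "\<dots> = (\<integral>\<^sup>+x. ennreal (indicator S x * std_normal_density x) \<partial>lborel)"
    by (intro nn_integral_cong) (auto split: split_indicator)
  also have "\<dots> = ennreal (LINT x:S|lborel. std_normal_density x)"
    unfolding set_lebesgue_integral_def
    using std_set_integrable[OF assms] unfolding set_integrable_def
    by (subst nn_integral_eq_integral) auto
  finally show ?thesis unfolding measure_def
    by (simp add: set_lebesgue_integral_def integral_nonneg_AE)
qed

lemma Phi_G: "Phi x = measure G {..x}"
  unfolding Phi_def by (simp add: G_measure)

lemma G_real_distribution: "real_distribution G"
  unfolding real_distribution_def real_distribution_axioms_def
  using G_prob by simp

lemma Phi_cdf: "Phi = cdf G"
  by (rule ext) (simp add: Phi_G cdf_def)

lemma Phi_at_top: "(Phi \<longlongrightarrow> 1) at_top"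
  unfolding Phi_cdf by (rule real_distribution.cdf_lim_at_top_prob[OF G_real_distribution])

lemma Phi_at_bot: "(Phi \<longlongrightarrow> 0) at_bot"
  unfolding Phi_cdf by (rule finite_borel_measure.cdf_lim_at_bot[OF real_distribution.finite_borel_measure_M[OF G_real_distribution]])

lemma Phi_decomp: "Phi x = Phi 0 + (LBINT t=0..x. std_normal_density t)"
proof -
  have int: "interval_lebesgue_integrable lborel a b std_normal_density" for a b
    unfolding interval_lebesgue_integrable_def by (auto intro!: std_set_integrable)
  have "(LBINT t=-\<infinity>..0. std_normal_density t) + (LBINT t=0..x. std_normal_density t)
      = (LBINT t=-\<infinity>..x. std_normal_density t)"
    by (rule interval_integral_sum) (rule int)
  moreover have "(LBINT t=-\<infinity>..ereal y. std_normal_density t) = Phi y" for y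
  proof -
    have "(LBINT t=-\<infinity>..ereal y. std_normal_density t) = (LBINT t:{..<y}. std_normal_density t)"
      by (simp add: interval_lebesgue_integral_def)
    also have "\<dots> = (LBINT t:{..y}. std_normal_density t)"
      by (rule set_integral_discrete_difference[where X="{y}"]) auto
    finally show ?thesis unfolding Phi_def .
  qed
  ultimately show ?thesis by (metis zero_ereal_def add.commute)
qed

lemma Phi_deriv: "(Phi has_real_derivative phi x) (at x)"
proof -
  define a where "a = - \<bar>x\<bar> - 1"
  define b where "b = \<bar>x\<bar> + 1"
  have "((\<lambda>u. LBINT y=ereal 0..u. std_normal_density y) has_vector_derivative (std_normal_density x)) (at x within {a..b})"
    by (rule interval_integral_FTC2) (auto simp: a_def b_def intro!: continuous_intros simp: normal_density_def)
  then have "((\<lambda>u. LBINT y=ereal 0..u. std_normal_density y) has_vector_derivative (std_normal_density x)) (at x)"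
    by (subst (asm) at_within_interior[of x]) (auto simp: a_def b_def)
  then have "((\<lambda>u. Phi 0 + (LBINT y=ereal 0..u. std_normal_density y)) has_real_derivative (std_normal_density x)) (at x)"
    by (auto intro!: derivative_eq_intros simp: has_real_derivative_iff_has_vector_derivative)
  moreover have "Phi = (\<lambda>u. Phi 0 + (LBINT y=ereal 0..u. std_normal_density y))"
    by (rule ext) (rule Phi_decomp[unfolded zero_ereal_def])
  ultimately show ?thesis unfolding phi_def by simp
qed

lemma Phi_cont: "isCont Phi x"
  using Phi_deriv by (rule DERIV_isCont)

lemma phi_cont: "isCont phi x"
  unfolding phi_def normal_density_def by (intro continuous_intros) auto

lemma G_Icc: assumes "a \<le> b" shows "measure G {a..b} = Phi b - Phi a"
proof -
  have "measure G {a..b} = (LBINT t:{a..b}. std_normal_density t)" by (simp add: G_measure)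
  also have "\<dots> = (LBINT t=a..b. std_normal_density t)" using assms by (simp add: interval_integral_Icc)
  also have "\<dots> = Phi b - Phi a"
  proof (rule interval_integral_FTC_finite)
    show "continuous_on {min a b..max a b} std_normal_density"
      by (auto intro!: continuous_intros simp: normal_density_def)
    fix t
    show "(Phi has_vector_derivative std_normal_density t) (at t within {min a b..max a b})"
      using Phi_deriv[of t] unfolding phi_def has_real_derivative_iff_has_vector_derivative
      by (rule has_vector_derivative_at_within)
  qed
  finally show ?thesis .
qed




locale LA =
  fixes n :: nat and \<mu> \<theta> :: real
  assumes n1: "n \<ge> 1" and mu0: "\<mu> > 0"
begin

definition "sn = sqrt (real n)"
definition "kk = sn * \<theta>"
definition "qq = real n * \<mu>\<^sup>2"
definition "Hf w = gfun qq (w + kk) - kk"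
definition "Wv y = sn * (ybar n y - \<theta>)"

lemma sn_pos: "sn > 0" unfolding sn_def using n1 by simp
lemma qq_pos: "qq > 0" unfolding qq_def using n1 mu0 by simp
lemma sqrt_qq: "sqrt qq = sn * \<mu>"
  unfolding qq_def sn_def using mu0 by (simp add: real_sqrt_mult)
lemma sn2: "sn * sn = real n" unfolding sn_def by simp

lemma X_eq: "sn * (thetaA \<mu> (ybar n y) - \<theta>) = Hf (Wv y)"
proof -
  define b where "b = ybar n y"
  have e: "Wv y + kk = sn * b" unfolding Wv_def kk_def b_def by (simp add: algebra_simps)
  have a: "\<bar>sn * b\<bar> \<le> sqrt qq \<longleftrightarrow> \<bar>b\<bar> \<le> \<mu>"
    unfolding sqrt_qq using sn_pos by (simp add: abs_mult)
  have c: "qq / (sn * b) = sn * (\<mu>\<^sup>2 / b)" if "b \<noteq> 0"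
    unfolding qq_def using sn_pos that sn2[symmetric] by (simp add: field_simps)
  show ?thesis
    unfolding Hf_def e gfun_def a thetaA_def b_def[symmetric]
    using c mu0 by (auto simp: algebra_simps kk_def)
qed

lemma Hf_meas[measurable]: "Hf \<in> borel_measurable borel"
  unfolding Hf_def gfun_def by measurable

lemma Wv_meas: "Wv \<in> borel_measurable (P n \<theta>)"
  using distributed_measurable[OF W_dist[OF n1, of \<theta>]] unfolding Wv_def sn_def by simp

lemma distr_W: "distr (P n \<theta>) lborel Wv = G"
  using distributed_distr_eq_density[OF W_dist[OF n1, of \<theta>]] unfolding Wv_def sn_def by simp

lemma event: assumes B: "B \<in> sets borel"
  shows "measure (P n \<theta>) {y \<in> space (P n \<theta>). sqrt (real n) * (thetaA \<mu> (ybar n y) - \<theta>) \<in> B}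
    = measure G (Hf -` B)"
proof -
  have "{y \<in> space (P n \<theta>). sqrt (real n) * (thetaA \<mu> (ybar n y) - \<theta>) \<in> B}
      = Wv -` (Hf -` B) \<inter> space (P n \<theta>)"
    using X_eq unfolding sn_def by auto
  also have "measure (P n \<theta>) \<dots> = measure (distr (P n \<theta>) lborel Wv) (Hf -` B)"
    by (rule measure_distr[symmetric]) (use Wv_meas measurable_sets[OF Hf_meas B] in auto)
  finally show ?thesis unfolding distr_W .
qed

lemma Hf_le: "Hf -` {..x} = {..(if sqrt (real n) * \<theta> + x \<ge> 0 then z2 n \<mu> \<theta> x else z1 n \<mu> \<theta> x)}"
proof -
  have *: "sqrt (((sqrt (real n) * \<theta> + x) / 2)\<^sup>2 + real n * \<mu>\<^sup>2) = sqrt (((x + kk)/2)\<^sup>2 + qq)"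
    unfolding kk_def sn_def qq_def by (simp add: add.commute)
  show ?thesis
  proof (cases "sqrt (real n) * \<theta> + x \<ge> 0")
    case True
    then have c: "x + kk \<ge> 0" unfolding kk_def sn_def by simp
    show ?thesis using True key2[OF qq_pos c]
      unfolding Hf_def z2_def * by (auto simp: kk_def sn_def field_simps)
  next
    case False
    then have c: "x + kk < 0" unfolding kk_def sn_def by simp
    show ?thesis using False key1[OF qq_pos c]
      unfolding Hf_def z1_def * by (auto simp: kk_def sn_def field_simps)
  qed
qed

lemma part1: "FA n \<mu> \<theta> x =
            (if sqrt (real n) * \<theta> + x \<ge> 0 then Phi (z2 n \<mu> \<theta> x) else 0)
          + (if sqrt (real n) * \<theta> + x < 0 then Phi (z1 n \<mu> \<theta> x) else 0)"
proof -
  have "FA n \<mu> \<theta> x = measure (P n \<theta>) {y \<in> space (P n \<theta>). sqrt (real n) * (thetaA \<mu> (ybar n y) - \<theta>) \<in> {..x}}"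
    unfolding FA_def by simp
  also have "\<dots> = measure G (Hf -` {..x})" by (rule event) simp
  also have "\<dots> = Phi (if sqrt (real n) * \<theta> + x \<ge> 0 then z2 n \<mu> \<theta> x else z1 n \<mu> \<theta> x)"
    unfolding Hf_le Phi_G ..
  finally show ?thesis by auto
qed


end




lemma sqrt_deriv_aux:
  fixes k q x :: real assumes q: "q > 0"
  shows "((\<lambda>x. sqrt (((k + x) / 2)\<^sup>2 + q)) has_real_derivative
     ((k + x) / 2) / sqrt (((k + x) / 2)\<^sup>2 + q) / 2) (at x)"
proof -
  have u: "((k + x) / 2)\<^sup>2 + q > 0" using q by (simp add: add_nonneg_pos)
  have "((\<lambda>x. ((k + x) / 2)\<^sup>2 + q) has_real_derivative (k + x) / 2) (at x)"
    by (auto intro!: derivative_eq_intros simp: power2_eq_square field_simps)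
  from DERIV_real_sqrt[OF u] this have "((\<lambda>x. sqrt (((k + x) / 2)\<^sup>2 + q)) has_real_derivative
     inverse (sqrt (((k + x) / 2)\<^sup>2 + q)) / 2 * ((k + x) / 2)) (at x)"
    by (rule DERIV_chain2)
  then show ?thesis by (simp add: field_simps)
qed

context LA begin

definition "d2 x = (1/2) * phi (z2 n \<mu> \<theta> x) * (1 + tA n \<mu> \<theta> x)"
definition "d1 x = (1/2) * phi (z1 n \<mu> \<theta> x) * (1 - tA n \<mu> \<theta> x)"

lemma u_pos: "((sqrt (real n) * \<theta> + x) / 2)\<^sup>2 + real n * \<mu>\<^sup>2 > 0"
  using qq_pos unfolding qq_def by (simp add: add_nonneg_pos)

lemma z2_deriv: "(z2 n \<mu> \<theta> has_real_derivative (1 + tA n \<mu> \<theta> x) / 2) (at x)"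
proof -
  have d: "((\<lambda>x. - (sqrt (real n) * \<theta> - x) / 2 + sqrt (((sqrt (real n) * \<theta> + x) / 2)\<^sup>2 + real n * \<mu>\<^sup>2))
     has_real_derivative 1/2 + tA n \<mu> \<theta> x / 2) (at x)"
    unfolding tA_def
    by (intro DERIV_add sqrt_deriv_aux) (auto intro!: derivative_eq_intros qq_pos[unfolded qq_def])
  have eqf: "z2 n \<mu> \<theta> = (\<lambda>x. - (sqrt (real n) * \<theta> - x) / 2 + sqrt (((sqrt (real n) * \<theta> + x) / 2)\<^sup>2 + real n * \<mu>\<^sup>2))"
    by (rule ext) (simp only: z2_def)
  have e: "(1 + tA n \<mu> \<theta> x) / 2 = 1/2 + tA n \<mu> \<theta> x / 2" by simp
  show ?thesis unfolding eqf e by (rule d)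
qed

lemma z1_deriv: "(z1 n \<mu> \<theta> has_real_derivative (1 - tA n \<mu> \<theta> x) / 2) (at x)"
proof -
  have d: "((\<lambda>x. - (sqrt (real n) * \<theta> - x) / 2 - sqrt (((sqrt (real n) * \<theta> + x) / 2)\<^sup>2 + real n * \<mu>\<^sup>2))
     has_real_derivative 1/2 - tA n \<mu> \<theta> x / 2) (at x)"
    unfolding tA_def
    by (intro DERIV_diff sqrt_deriv_aux) (auto intro!: derivative_eq_intros qq_pos[unfolded qq_def])
  have eqf: "z1 n \<mu> \<theta> = (\<lambda>x. - (sqrt (real n) * \<theta> - x) / 2 - sqrt (((sqrt (real n) * \<theta> + x) / 2)\<^sup>2 + real n * \<mu>\<^sup>2))"
    by (rule ext) (simp only: z1_def)
  have e: "(1 - tA n \<mu> \<theta> x) / 2 = 1/2 - tA n \<mu> \<theta> x / 2" by simp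
  show ?thesis unfolding eqf e by (rule d)
qed

lemma F2_deriv: "((\<lambda>x. Phi (z2 n \<mu> \<theta> x)) has_real_derivative d2 x) (at x)"
  using DERIV_chain2[OF Phi_deriv z2_deriv] unfolding d2_def by (simp add: field_simps)

lemma F1_deriv: "((\<lambda>x. Phi (z1 n \<mu> \<theta> x)) has_real_derivative d1 x) (at x)"
  using DERIV_chain2[OF Phi_deriv z1_deriv] unfolding d1_def by (simp add: field_simps)

lemma tA_bound: "\<bar>tA n \<mu> \<theta> x\<bar> \<le> 1"
proof -
  define c where "c = (sqrt (real n) * \<theta> + x) / 2"
  have "sqrt (c\<^sup>2) \<le> sqrt (c\<^sup>2 + real n * \<mu>\<^sup>2)" by (rule real_sqrt_le_mono) simp
  moreover have "sqrt (c\<^sup>2 + real n * \<mu>\<^sup>2) > 0" using u_pos by (simp add: c_def add_nonneg_pos n1 mu0)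
  ultimately show ?thesis unfolding tA_def c_def[symmetric] by (simp add: abs_div divide_le_eq_1)
qed

lemma d2_nonneg: "d2 x \<ge> 0"
  unfolding d2_def phi_def using tA_bound[of x] by (intro mult_nonneg_nonneg) auto
lemma d1_nonneg: "d1 x \<ge> 0"
  unfolding d1_def phi_def using tA_bound[of x] by (intro mult_nonneg_nonneg) auto

lemma z_cont: "isCont (z2 n \<mu> \<theta>) x" "isCont (z1 n \<mu> \<theta>) x" "isCont (tA n \<mu> \<theta>) x"
  using DERIV_isCont[OF z2_deriv] DERIV_isCont[OF z1_deriv] apply auto
  unfolding tA_def using u_pos[of x] by (intro continuous_intros) auto

lemma d_cont: "isCont d2 x" "isCont d1 x"
  unfolding d2_def d1_def
  by (auto intro!: continuous_intros isCont_o2[OF _ phi_cont] z_cont)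

lemma z_bounds: "z1 n \<mu> \<theta> x \<le> x" "x \<le> z2 n \<mu> \<theta> x"
proof -
  define c where "c = (sqrt (real n) * \<theta> + x) / 2"
  have "sqrt (c\<^sup>2) \<le> sqrt (c\<^sup>2 + real n * \<mu>\<^sup>2)" by (rule real_sqrt_le_mono) simp
  then have "\<bar>c\<bar> \<le> sqrt (c\<^sup>2 + real n * \<mu>\<^sup>2)" by simp
  then show "z1 n \<mu> \<theta> x \<le> x" "x \<le> z2 n \<mu> \<theta> x"
    unfolding z1_def z2_def c_def[symmetric] by (auto simp: c_def field_simps abs_le_iff)
qed

lemma F2_top: "((\<lambda>x. Phi (z2 n \<mu> \<theta> x)) \<longlongrightarrow> 1) at_top"
proof (rule filterlim_compose[OF Phi_at_top])
  show "filterlim (z2 n \<mu> \<theta>) at_top at_top"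
    by (rule filterlim_at_top_mono[OF filterlim_ident]) (auto simp: z_bounds)
qed

lemma F1_bot: "((\<lambda>x. Phi (z1 n \<mu> \<theta> x)) \<longlongrightarrow> 0) at_bot"
proof (rule filterlim_compose[OF Phi_at_bot])
  show "filterlim (z1 n \<mu> \<theta>) at_bot at_bot"
    by (rule filterlim_at_bot_mono[OF filterlim_ident]) (auto simp: z_bounds)
qed

end




context LA begin

lemma cont_right: "((\<lambda>x. Phi (z2 n \<mu> \<theta> x)) \<longlongrightarrow> Phi (z2 n \<mu> \<theta> a)) (at_right a)"
  using DERIV_isCont[OF F2_deriv[of a]] unfolding isCont_def filterlim_at_split by simp

lemma cont_left1: "((\<lambda>x. Phi (z1 n \<mu> \<theta> x)) \<longlongrightarrow> Phi (z1 n \<mu> \<theta> a)) (at_right a)"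
  using DERIV_isCont[OF F1_deriv[of a]] unfolding isCont_def filterlim_at_split by simp

lemma cont_left2: "((\<lambda>x. Phi (z1 n \<mu> \<theta> x)) \<longlongrightarrow> Phi (z1 n \<mu> \<theta> a)) (at_left a)"
  using DERIV_isCont[OF F1_deriv[of a]] unfolding isCont_def filterlim_at_split by simp

lemma FTC_right:
  "set_integrable lborel (einterval (ereal a) \<infinity>) d2"
  "(LBINT t=ereal a..\<infinity>. d2 t) = 1 - Phi (z2 n \<mu> \<theta> a)"
  by (rule interval_integral_FTC_nonneg[where F="\<lambda>x. Phi (z2 n \<mu> \<theta> x)" and A="Phi (z2 n \<mu> \<theta> a)" and B=1];
      (simp add: F2_deriv d_cont d2_nonneg ereal_tendsto_simps cont_right F2_top)?)+

lemma FTC_left: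
  "set_integrable lborel (einterval (-\<infinity>) (ereal b)) d1"
  by (rule interval_integral_FTC_nonneg[where F="\<lambda>x. Phi (z1 n \<mu> \<theta> x)" and A=0 and B="Phi (z1 n \<mu> \<theta> b)"];
      (simp add: F1_deriv d_cont d1_nonneg ereal_tendsto_simps cont_left2 F1_bot)?)+

lemma FTC_mid: assumes "a < b"
  shows "(LBINT t=ereal a..ereal b. d1 t) = Phi (z1 n \<mu> \<theta> b) - Phi (z1 n \<mu> \<theta> a)"
  by (rule interval_integral_FTC_nonneg[where F="\<lambda>x. Phi (z1 n \<mu> \<theta> x)"];
      (simp add: assms F1_deriv d_cont d1_nonneg ereal_tendsto_simps cont_left1 cont_left2)?)+

end




context LA begin

definition "pp = - sqrt (real n) * \<theta>"

lemma pp_kk: "pp = - kk" unfolding pp_def kk_def sn_def by simp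

lemma densA_eq: "densA n \<mu> \<theta> x = indicator {pp<..} x * d2 x + indicator {..<pp} x * d1 x"
  unfolding densA_def d2_def d1_def pp_def
  by (auto split: split_indicator simp: algebra_simps)

lemma densA_nonneg: "densA n \<mu> \<theta> x \<ge> 0"
  unfolding densA_eq using d1_nonneg[of x] d2_nonneg[of x] by (auto split: split_indicator)

lemma densA_int: "integrable lborel (densA n \<mu> \<theta>)"
proof -
  have "integrable lborel (\<lambda>x. indicator {pp<..} x * d2 x + indicator {..<pp} x * d1 x)"
    using FTC_right(1)[of pp] FTC_left[of pp] unfolding set_integrable_def by simp
  then show ?thesis unfolding densA_eq[abs_def] .
qed

lemma densA_ii: "interval_lebesgue_integrable lborel a b (densA n \<mu> \<theta>)"
  unfolding interval_lebesgue_integrable_def set_integrable_def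
  using densA_int by (auto simp: mult.commute[of "indicator _ _"] intro!: integrable_real_mult_indicator)

lemma densA_Ioi_ge: assumes "x \<ge> pp"
  shows "(LINT t:{x<..}|lborel. densA n \<mu> \<theta> t) = 1 - Phi (z2 n \<mu> \<theta> x)"
proof -
  have "(LINT t:{x<..}|lborel. densA n \<mu> \<theta> t) = (LINT t:{x<..}|lborel. d2 t)"
    by (rule set_lebesgue_integral_cong) (use assms in \<open>auto simp: densA_eq\<close>)
  also have "\<dots> = (LBINT t=ereal x..\<infinity>. d2 t)"
    by (simp add: interval_lebesgue_integral_def)
  finally show ?thesis using FTC_right(2) by simp
qed

lemma densA_Ioi_lt: assumes "x < pp"
  shows "(LINT t:{x<..}|lborel. densA n \<mu> \<theta> t)
     = (Phi (z1 n \<mu> \<theta> pp) - Phi (z1 n \<mu> \<theta> x)) + (1 - Phi (z2 n \<mu> \<theta> pp))"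
proof -
  have "(LINT t:{x<..}|lborel. densA n \<mu> \<theta> t) = (LBINT t=ereal x..\<infinity>. densA n \<mu> \<theta> t)"
    by (simp add: interval_lebesgue_integral_def)
  also have "\<dots> = (LBINT t=ereal x..ereal pp. densA n \<mu> \<theta> t) + (LBINT t=ereal pp..\<infinity>. densA n \<mu> \<theta> t)"
    by (rule interval_integral_sum[symmetric]) (rule densA_ii)
  also have "(LBINT t=ereal x..ereal pp. densA n \<mu> \<theta> t) = (LBINT t=ereal x..ereal pp. d1 t)"
    by (rule interval_integral_cong) (use assms in \<open>auto simp: densA_eq einterval_iff min_def max_def\<close>)
  also have "(LBINT t=ereal pp..\<infinity>. densA n \<mu> \<theta> t) = (LBINT t=ereal pp..\<infinity>. d2 t)"
    by (rule interval_integral_cong) (auto simp: densA_eq einterval_iff)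
  finally show ?thesis using FTC_right(2)[of pp] FTC_mid[OF assms] by simp
qed

lemma z_at_pp: "z1 n \<mu> \<theta> pp = - kk - sqrt qq" "z2 n \<mu> \<theta> pp = - kk + sqrt qq"
  unfolding z1_def z2_def pp_def kk_def sn_def qq_def by simp_all

abbreviation "NN \<equiv> distr G borel Hf"

lemma NN_prob: "prob_space NN"
  by (rule prob_space.prob_space_distr[OF G_prob]) simp

lemma mNN: "S \<in> sets borel \<Longrightarrow> measure NN S = measure G (Hf -` S)"
  by (subst measure_distr) auto

lemma Hf_pp: "Hf -` {pp} = {- sqrt qq - kk .. sqrt qq - kk}"
  unfolding Hf_def pp_kk using gfun_zero[OF qq_pos] by (auto simp: abs_le_iff)

lemma mNN_pp: "measure NN {pp} = Phi (sqrt qq - kk) - Phi (- sqrt qq - kk)"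
  unfolding mNN[of "{pp}", simplified] Hf_pp
  by (rule G_Icc) (use qq_pos in simp)

lemma mNN_le: "measure NN {..x} = Phi (if sqrt (real n) * \<theta> + x \<ge> 0 then z2 n \<mu> \<theta> x else z1 n \<mu> \<theta> x)"
  by (simp add: mNN Hf_le Phi_G)

lemma mNN_gt: "measure NN {x<..} = 1 - measure NN {..x}"
proof -
  interpret prob_space NN by (rule NN_prob)
  have "{x<..} = space NN - {..x}" by auto
  then show ?thesis by (simp only:) (subst prob_compl, auto)
qed

lemma main_Ioi: "measure NN ({x<..} - {pp}) = (LINT t:{x<..}|lborel. densA n \<mu> \<theta> t)"
proof (cases "x \<ge> pp")
  case True
  then have "{x<..} - {pp} = {x<..}" by auto
  moreover have "sqrt (real n) * \<theta> + x \<ge> 0" using True unfolding pp_def by simp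
  ultimately show ?thesis using densA_Ioi_ge[OF True] mNN_gt mNN_le by simp
next
  case False
  interpret prob_space NN by (rule NN_prob)
  have "measure NN ({x<..} - {pp}) = measure NN {x<..} - measure NN {pp}"
    by (subst finite_measure_Diff) (use False in auto)
  moreover have "\<not> sqrt (real n) * \<theta> + x \<ge> 0" using False unfolding pp_def by simp
  moreover have "\<not> x \<ge> pp" using False .
  moreover have "Phi (- kk - sqrt qq) = Phi (- sqrt qq - kk)" by (rule arg_cong[where f=Phi]) linarith
  ultimately show ?thesis using densA_Ioi_lt[of x] mNN_gt[of x] mNN_le[of x] mNN_pp z_at_pp
    by (simp add: algebra_simps)
qed

end




context LA begin

lemma NN_em: "emeasure NN S = ennreal (measure NN S)"
proof -
  interpret prob_space NN by (rule NN_prob)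
  show ?thesis by (rule emeasure_eq_measure)
qed

lemma densA_set_int: "(LINT x:A|lborel. densA n \<mu> \<theta> x) \<ge> 0"
  unfolding set_lebesgue_integral_def
  by (rule integral_nonneg_AE) (auto intro!: AE_I2 simp: densA_nonneg)

lemma densA_meas[measurable]: "densA n \<mu> \<theta> \<in> borel_measurable borel"
  using borel_measurable_integrable[OF densA_int] by simp

lemma N2_em: assumes "A \<in> sets borel"
  shows "emeasure (density lborel (\<lambda>x. ennreal (densA n \<mu> \<theta> x))) A = ennreal (LINT x:A|lborel. densA n \<mu> \<theta> x)"
proof -
  have "emeasure (density lborel (\<lambda>x. ennreal (densA n \<mu> \<theta> x))) A
      = (\<integral>\<^sup>+x. ennreal (densA n \<mu> \<theta> x) * indicator A x \<partial>lborel)"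
    using assms by (subst emeasure_density) auto
  also have "\<dots> = (\<integral>\<^sup>+x. ennreal (indicator A x * densA n \<mu> \<theta> x) \<partial>lborel)"
    by (intro nn_integral_cong) (auto split: split_indicator)
  also have "\<dots> = ennreal (LINT x:A|lborel. densA n \<mu> \<theta> x)"
    unfolding set_lebesgue_integral_def
    using assms densA_int densA_nonneg
    by (subst nn_integral_eq_integral)
      (auto simp: mult.commute[of "indicator _ _"] intro!: integrable_real_mult_indicator)
  finally show ?thesis .
qed

lemma N1_em: assumes "A \<in> sets borel"
  shows "emeasure (density NN (indicator (UNIV - {pp}))) A = emeasure NN (A - {pp})"
proof -
  have "emeasure (density NN (indicator (UNIV - {pp}))) A
      = (\<integral>\<^sup>+x. indicator (UNIV - {pp}) x * indicator A x \<partial>NN)"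
    using assms by (subst emeasure_density) auto
  also have "\<dots> = (\<integral>\<^sup>+x. indicator (A - {pp}) x \<partial>NN)"
    by (intro nn_integral_cong) (auto split: split_indicator)
  also have "\<dots> = emeasure NN (A - {pp})"
    using assms by (subst nn_integral_indicator) auto
  finally show ?thesis .
qed

lemma N12: "density NN (indicator (UNIV - {pp})) = density lborel (\<lambda>x. ennreal (densA n \<mu> \<theta> x))"
proof (rule measure_eqI_lessThan)
  show "sets (density NN (indicator (UNIV - {pp}))) = sets borel" by simp
  show "sets (density lborel (\<lambda>x. ennreal (densA n \<mu> \<theta> x))) = sets borel" by simp
  fix x :: real
  show "emeasure (density NN (indicator (UNIV - {pp}))) {x<..} < \<infinity>"
    by (subst N1_em) (auto simp: NN_em)
  show "emeasure (density NN (indicator (UNIV - {pp}))) {x<..} =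
        emeasure (density lborel (\<lambda>x. ennreal (densA n \<mu> \<theta> x))) {x<..}"
    by (subst N1_em, simp, subst N2_em, simp, subst NN_em) (auto simp: main_Ioi)
qed

lemma main_A: assumes A: "A \<in> sets borel"
  shows "measure NN A = indicator A pp * measure NN {pp} + (LINT x:A|lborel. densA n \<mu> \<theta> x)"
proof -
  interpret prob_space NN by (rule NN_prob)
  have "ennreal (measure NN (A - {pp})) = ennreal (LINT x:A|lborel. densA n \<mu> \<theta> x)"
    using N1_em[OF A] N2_em[OF A] N12 A NN_em[of "A - {pp}"] by auto
  then have 1: "measure NN (A - {pp}) = (LINT x:A|lborel. densA n \<mu> \<theta> x)"
    using densA_set_int[of A] by (subst (asm) ennreal_inj) auto
  have 2: "measure NN (A - {pp}) = measure NN A - measure NN (A \<inter> {pp})"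
    using A by (subst finite_measure_Diff') auto
  have 3: "measure NN (A \<inter> {pp}) = indicator A pp * measure NN {pp}"
    by (cases "pp \<in> A") auto
  show ?thesis using 1 2 3 by simp
qed

end

theorem mainTheorem5:
  fixes n :: nat and \<mu> \<theta> :: real
  assumes "n \<ge> 1" and "\<mu> > 0"
  shows "(\<forall>x. FA n \<mu> \<theta> x =
            (if sqrt (real n) * \<theta> + x \<ge> 0 then Phi (z2 n \<mu> \<theta> x) else 0)
          + (if sqrt (real n) * \<theta> + x < 0 then Phi (z1 n \<mu> \<theta> x) else 0))
       \<and> (\<forall>A \<in> sets borel.
            measure (P n \<theta>)
              {y \<in> space (P n \<theta>). sqrt (real n) * (thetaA \<mu> (ybar n y) - \<theta>) \<in> A}
          = (Phi (sqrt (real n) * (- \<theta> + \<mu>)) - Phi (sqrt (real n) * (- \<theta> - \<mu>)))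
              * indicator A (- sqrt (real n) * \<theta>)
            + (LINT x:A|lborel. densA n \<mu> \<theta> x))"
proof -
  interpret LA n \<mu> \<theta> using assms by unfold_locales
  have at: "Phi (sqrt qq - kk) - Phi (- sqrt qq - kk)
      = Phi (sqrt (real n) * (- \<theta> + \<mu>)) - Phi (sqrt (real n) * (- \<theta> - \<mu>))"
  proof -
    have "- (sqrt (real n) * \<mu>) - sqrt (real n) * \<theta> = sqrt (real n) * (- \<theta> - \<mu>)"
      "sqrt (real n) * \<mu> - sqrt (real n) * \<theta> = sqrt (real n) * (- \<theta> + \<mu>)"
      by (simp_all add: algebra_simps)
    then show ?thesis unfolding sqrt_qq kk_def sn_def by simp
  qed
  show ?thesis
  proof (intro conjI allI ballI)
    fix x show "FA n \<mu> \<theta> x =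
            (if sqrt (real n) * \<theta> + x \<ge> 0 then Phi (z2 n \<mu> \<theta> x) else 0)
          + (if sqrt (real n) * \<theta> + x < 0 then Phi (z1 n \<mu> \<theta> x) else 0)"
      by (rule part1)
  next
    fix A :: "real set" assume A: "A \<in> sets borel"
    have "measure (P n \<theta>) {y \<in> space (P n \<theta>). sqrt (real n) * (thetaA \<mu> (ybar n y) - \<theta>) \<in> A}
       = measure NN A" using A by (simp add: event mNN)
    also have "\<dots> = indicator A pp * measure NN {pp} + (LINT x:A|lborel. densA n \<mu> \<theta> x)"
      by (rule main_A[OF A])
    finally show "measure (P n \<theta>) {y \<in> space (P n \<theta>). sqrt (real n) * (thetaA \<mu> (ybar n y) - \<theta>) \<in> A}
          = (Phi (sqrt (real n) * (- \<theta> + \<mu>)) - Phi (sqrt (real n) * (- \<theta> - \<mu>)))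
              * indicator A (- sqrt (real n) * \<theta>)
            + (LINT x:A|lborel. densA n \<mu> \<theta> x)"
      unfolding pp_def[symmetric] using mNN_pp at by simp
  qed
qed


end
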